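(* Let $f:\mathbb B\to\mathbb B$ be slice regular with $f(\mathbb B_I)\subseteq\mathbb B_I$ for some $I\in\mathbb S$. Then for every $n\in\mathbb N$ the $n$-fold regular composition $f^{\odot n}$ (defined by $f^{\odot1}=f$, $f^{\odot(n+1)}=f^{\odot}(f^{\odot n})$) is well defined as a regular self-mapping of $\mathbb B$, and $$f^{\odot n}=\mathrm{ext}\big((f_I)^n\big),$$ where $(f_I)^n=f_I\circ\cdots\circ f_I$ is the $n$-th ordinary iterate of the holomorphic self-map $f_I=f|_{\mathbb B_I}$ of $\mathbb B_I$.
   Context: $\mathbb H$ quaternions, $\mathbb S=\{q:q^2=-1\}$, $\mathbb C_I=\mathbb R+I\mathbb R$, $\mathbb B$ open unit ball, $\mathbb B_I=\mathbb B\cap\mathbb C_I$. A function on a domain $\Omega$ is slice regular if on each $\Omega_I=\Omega\cap\mathbb C_I$ it is $C^1$ and annihilated by $\frac12(\partial_x+I\partial_y)$; regular functions on $\mathbb B$ are convergent power series $\sum_nq^na_n$. $\ast$-product: $\big(\sum q^na_n\big)\ast\big(\sum q^nb_n\big)=\sum_nq^n\sum_ka_kb_{n-k}$, $\varphi^{\ast0}=1$, $\varphi^{\ast n}=\varphi\ast\varphi^{\ast(n-1)}$. Regular composition: $g^{\odot}\varphi=\sum_n\varphi^{\ast n}a_n$ for $g=\sum q^na_n$. Regular extension: for $h:\mathbb B_I\to\mathbb H$ with $\frac12(\partial_x+I\partial_y)h=0$, $\mathrm{ext}(h)(x+yJ)=\frac12\big(h(x+yI)+h(x-yI)\big)+\frac12JI\big(h(x-yI)-h(x+yI)\big)$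 for $J\in\mathbb S$; it is the unique regular function on $\mathbb B$ extending $h$. *)

theory Defs
  imports "HOL-Analysis.Analysis"
begin

text \<open>A quaternion z + w j (z, w complex, i.e. a + b i + c j + d k with z = a + b i,
  w = c + d i) is represented by the pair (z, w). Addition, real scaling, the norm
  (Euclidean norm on R^4) and the topology are those of the product type
  complex * complex; only the quaternion multiplication is defined separately.\<close>

type_synonym quat = "complex \<times> complex"

definition qmul :: "quat \<Rightarrow> quat \<Rightarrow> quat" where
  "qmul p q = (fst p * fst q - snd p * cnj (snd q), fst p * snd q + snd p * cnj (fst q))"

definition qone :: quat where "qone = (1, 0)"

primrec qpow :: "quat \<Rightarrow> nat \<Rightarrow> quat" where
  "qpow q 0 = qone"
| "qpow q (Suc n) = qmul q (qpow q n)"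

definition qreal :: "real \<Rightarrow> quat" where "qreal x = (complex_of_real x, 0)"

definition qre :: "quat \<Rightarrow> real" where "qre q = Re (fst q)"

definition qim :: "quat \<Rightarrow> quat" where "qim q = q - qreal (qre q)"

definition qsphere :: "quat set" where "qsphere = {q. qmul q q = - qone}"

definition slice :: "real \<Rightarrow> real \<Rightarrow> quat \<Rightarrow> quat" where
  "slice x y I = qreal x + y *\<^sub>R I"

definition qball :: "quat set" where "qball = {q. norm q < 1}"

definition qballI :: "quat \<Rightarrow> quat set" where
  "qballI I = {q \<in> qball. \<exists>x y. q = slice x y I}"

definition slice_regular :: "quat set \<Rightarrow> (quat \<Rightarrow> quat) \<Rightarrow> bool" where
  "slice_regular \<Omega> f \<longleftrightarrow>
     (\<forall>I\<in>qsphere.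
        \<exists>D :: real \<times> real \<Rightarrow> real \<times> real \<Rightarrow> quat.
          (\<forall>p\<in>{(x, y). slice x y I \<in> \<Omega>}.
              ((\<lambda>(x, y). f (slice x y I)) has_derivative D p) (at p)) \<and>
          continuous_on {(x, y). slice x y I \<in> \<Omega>} (\<lambda>p. D p (1, 0)) \<and>
          continuous_on {(x, y). slice x y I \<in> \<Omega>} (\<lambda>p. D p (0, 1)) \<and>
          (\<forall>p\<in>{(x, y). slice x y I \<in> \<Omega>}. D p (1, 0) + qmul I (D p (0, 1)) = 0))"

definition pseries :: "(nat \<Rightarrow> quat) \<Rightarrow> quat \<Rightarrow> quat" where
  "pseries a q = (\<Sum>n. qmul (qpow q n) (a n))"

definition qcoeffs :: "(quat \<Rightarrow> quat) \<Rightarrow> nat \<Rightarrow> quat" where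
  "qcoeffs f = (SOME a. \<forall>q\<in>qball. (\<lambda>n. qmul (qpow q n) (a n)) sums f q)"

definition star_coeffs :: "(nat \<Rightarrow> quat) \<Rightarrow> (nat \<Rightarrow> quat) \<Rightarrow> nat \<Rightarrow> quat" where
  "star_coeffs a b n = (\<Sum>k\<le>n. qmul (a k) (b (n - k)))"

primrec star_pow_coeffs :: "(nat \<Rightarrow> quat) \<Rightarrow> nat \<Rightarrow> nat \<Rightarrow> quat" where
  "star_pow_coeffs a 0 = (\<lambda>m. if m = 0 then qone else 0)"
| "star_pow_coeffs a (Suc n) = star_coeffs a (star_pow_coeffs a n)"

definition star_pow :: "(quat \<Rightarrow> quat) \<Rightarrow> nat \<Rightarrow> quat \<Rightarrow> quat" where
  "star_pow \<phi> n = pseries (star_pow_coeffs (qcoeffs \<phi>) n)"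

definition reg_comp :: "(quat \<Rightarrow> quat) \<Rightarrow> (quat \<Rightarrow> quat) \<Rightarrow> quat \<Rightarrow> quat" where
  "reg_comp g \<phi> = (\<lambda>q. \<Sum>n. qmul (star_pow \<phi> n q) (qcoeffs g n))"

text \<open>n-fold regular composition for n \<ge> 1: f^{\<odot>1} = f, f^{\<odot>(n+1)} = f^{\<odot>}(f^{\<odot>n}).
  (The value at n = 0 is an irrelevant placeholder.)\<close>
primrec reg_iter :: "(quat \<Rightarrow> quat) \<Rightarrow> nat \<Rightarrow> quat \<Rightarrow> quat" where
  "reg_iter f 0 = (\<lambda>q. q)"
| "reg_iter f (Suc n) = (if n = 0 then f else reg_comp f (reg_iter f n))"

text \<open>ext(h)(x + yJ) = 1/2 (h(x+yI) + h(x-yI)) + 1/2 J I (h(x-yI) - h(x+yI)),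
  with x = Re q, y = |Im q|, J = Im q / |Im q| (J = I when q is real; then y = 0
  and the choice of J is irrelevant).\<close>
definition regext :: "quat \<Rightarrow> (quat \<Rightarrow> quat) \<Rightarrow> quat \<Rightarrow> quat" where
  "regext I h q =
     (let x = qre q; y = norm (qim q);
          J = (if y = 0 then I else (1 / y) *\<^sub>R qim q)
      in (1/2) *\<^sub>R (h (slice x y I) + h (slice x (- y) I))
         + (1/2) *\<^sub>R qmul (qmul J I) (h (slice x (- y) I) - h (slice x y I)))"

end

theory Submission
  imports Defs "HOL-Complex_Analysis.Complex_Analysis"
begin


lemma qmul_assoc: "qmul (qmul p q) r = qmul p (qmul q r)"
  by (cases p; cases q; cases r) (simp add: qmul_def algebra_simps)

lemma qmul_add_left: "qmul (p + q) r = qmul p r + qmul q r"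
  by (cases p; cases q; cases r) (simp add: qmul_def algebra_simps)
lemma qmul_add_right: "qmul r (p + q) = qmul r p + qmul r q"
  by (cases p; cases q; cases r) (simp add: qmul_def algebra_simps)
lemma qmul_diff_left: "qmul (p - q) r = qmul p r - qmul q r"
  by (cases p; cases q; cases r) (simp add: qmul_def algebra_simps)
lemma qmul_diff_right: "qmul r (p - q) = qmul r p - qmul r q"
  by (cases p; cases q; cases r) (simp add: qmul_def algebra_simps)
lemma qmul_scaleR_left: "qmul (c *\<^sub>R p) r = c *\<^sub>R qmul p r"
  by (cases p; cases r) (simp add: qmul_def algebra_simps scaleR_conv_of_real)
lemma qmul_scaleR_right: "qmul r (c *\<^sub>R p) = c *\<^sub>R qmul r p"
  by (cases p; cases r) (simp add: qmul_def algebra_simps scaleR_conv_of_real)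
lemma qmul_zero_left[simp]: "qmul 0 p = 0"
  by (simp add: qmul_def zero_prod_def)
lemma qmul_zero_right[simp]: "qmul p 0 = 0"
  by (simp add: qmul_def zero_prod_def)
lemma qmul_minus_left: "qmul (- p) r = - qmul p r"
  by (cases p; cases r) (simp add: qmul_def algebra_simps)
lemma qmul_minus_right: "qmul r (- p) = - qmul r p"
  by (cases p; cases r) (simp add: qmul_def algebra_simps)
lemma qmul_qone_left[simp]: "qmul qone p = p"
  by (cases p) (simp add: qmul_def qone_def)
lemma qmul_qone_right[simp]: "qmul p qone = p"
  by (cases p) (simp add: qmul_def qone_def)
lemma qmul_qreal_left: "qmul (qreal x) p = x *\<^sub>R p"
  by (cases p) (simp add: qmul_def qreal_def scaleR_conv_of_real)
lemma qmul_qreal_right: "qmul p (qreal x) = x *\<^sub>R p"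
  by (cases p) (simp add: qmul_def qreal_def scaleR_conv_of_real mult.commute)

lemma qsphere_iff: "I \<in> qsphere \<longleftrightarrow> Re (fst I) = 0 \<and> (cmod (fst I))\<^sup>2 + (cmod (snd I))\<^sup>2 = 1"
proof (cases I)
  case (Pair a b)
  obtain a1 a2 where a: "a = Complex a1 a2" by (cases a)
  obtain b1 b2 where b: "b = Complex b1 b2" by (cases b)
  have "I \<in> qsphere \<longleftrightarrow> a1*a1 - a2*a2 - (b1*b1+b2*b2) = -1 \<and> 2*a1*a2 = 0 \<and> 2*a1*b1 = 0 \<and> 2*a1*b2 = 0"
    by (simp add: qsphere_def qmul_def qone_def Pair a b complex_eq_iff algebra_simps) blast
  also have "\<dots> \<longleftrightarrow> a1 = 0 \<and> a2*a2 + b1*b1 + b2*b2 = 1"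
    apply (auto simp: algebra_simps)
    by (metis add_pos_nonneg zero_le_square zero_less_one less_irrefl)+
  finally show ?thesis by (auto simp: Pair a b cmod_power2 power2_eq_square[symmetric] add.assoc)
qed



definition sl :: "quat \<Rightarrow> complex \<Rightarrow> quat" where "sl J z = slice (Re z) (Im z) J"

lemma qreal_eq: "qreal x = x *\<^sub>R qone"
  by (simp add: qreal_def qone_def scaleR_conv_of_real)

lemma qsphere_sq: "J \<in> qsphere \<Longrightarrow> qmul J J = - qone"
  by (simp add: qsphere_def)

lemma qsphere_sq2: "J \<in> qsphere \<Longrightarrow> qmul J (qmul J q) = - q"
  by (simp add: qmul_assoc[symmetric] qsphere_sq qmul_minus_left)

lemma sl_eq: "sl J z = Re z *\<^sub>R qone + Im z *\<^sub>R J"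
  by (simp add: sl_def slice_def qreal_eq)

lemma sl_add: "sl J (u + v) = sl J u + sl J v"
  by (simp add: sl_eq algebra_simps)
lemma sl_diff: "sl J (u - v) = sl J u - sl J v"
  by (simp add: sl_eq algebra_simps)
lemma sl_minus: "sl J (- u) = - sl J u"
  by (simp add: sl_eq algebra_simps)
lemma sl_scale: "sl J (complex_of_real r * u) = r *\<^sub>R sl J u"
  by (simp add: sl_eq algebra_simps)
lemma sl_of_real[simp]: "sl J (complex_of_real x) = qreal x"
  by (simp add: sl_eq qreal_eq)
lemma sl_zero[simp]: "sl J 0 = 0"
  by (simp add: sl_eq)
lemma sl_one[simp]: "sl J 1 = qone"
  by (simp add: sl_eq)
lemma sl_sum: "sl J (sum f A) = (\<Sum>a\<in>A. sl J (f a))"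
  by (induction A rule: infinite_finite_induct) (auto simp: sl_add)

lemma bounded_linear_sl: "bounded_linear (sl J)"
  unfolding sl_eq
  by (intro bounded_linear_add bounded_linear_compose[OF bounded_linear_scaleR_left bounded_linear_Re]
     bounded_linear_compose[OF bounded_linear_scaleR_left bounded_linear_Im])

lemma sl_mult: "J \<in> qsphere \<Longrightarrow> qmul (sl J u) (sl J v) = sl J (u * v)"
  by (simp add: sl_eq qmul_add_left qmul_add_right qmul_scaleR_left qmul_scaleR_right
        qsphere_sq algebra_simps)

lemma sl_pow: "J \<in> qsphere \<Longrightarrow> qpow (sl J z) k = sl J (z ^ k)"
  by (induction k) (simp_all add: sl_mult)

lemma qmul_J_sl: "J \<in> qsphere \<Longrightarrow> qmul J (sl J w) = sl J (\<i> * w)"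
proof -
  assume J: "J \<in> qsphere"
  have "J = sl J \<i>" by (simp add: sl_eq)
  then have "qmul J (sl J w) = qmul (sl J \<i>) (sl J w)" by simp
  also have "\<dots> = sl J (\<i> * w)" using J by (simp add: sl_mult)
  finally show ?thesis .
qed

lemma qre_sl: "J \<in> qsphere \<Longrightarrow> qre (sl J z) = Re z"
  by (simp add: sl_eq qre_def qone_def qsphere_iff)

lemma norm_sl: "J \<in> qsphere \<Longrightarrow> norm (sl J z) = cmod z"
proof -
  assume J: "J \<in> qsphere"
  obtain a b where Jab: "J = (a, b)" by (cases J)
  obtain a1 a2 where a: "a = Complex a1 a2" by (cases a)
  obtain b1 b2 where b: "b = Complex b1 b2" by (cases b)
  obtain z1 z2 where z: "z = Complex z1 z2" by (cases z)
  from J have a1: "a1 = 0" and n: "a2^2 + b1^2 + b2^2 = 1"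
    by (auto simp: qsphere_iff Jab a b cmod_power2 add.assoc)
  have "(norm (sl J z))^2 = (cmod z)^2"
    by (simp add: sl_eq Jab a b z qone_def norm_Pair cmod_power2 a1 power_mult_distrib)
       (use arg_cong[OF n, of "\<lambda>t. t * z2^2"] in \<open>simp add: algebra_simps power2_eq_square\<close>)
  then show ?thesis by (simp add: power2_eq_iff_nonneg)
qed

definition pI :: "quat \<Rightarrow> quat \<Rightarrow> complex" where
  "pI I p = Complex (qre p) (- qre (qmul I p))"

lemma pI_sl: "I \<in> qsphere \<Longrightarrow> pI I (sl I w) = w"
  by (simp add: pI_def qmul_J_sl qre_sl complex_eq_iff)

lemma slice_sl: "slice x y J = sl J (Complex x y)"
  by (simp add: sl_def)



lemma norm_qmul: "norm (qmul p q) = norm p * norm q"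
proof -
  obtain a b where p: "p = (a, b)" by (cases p)
  obtain c d where q: "q = (c, d)" by (cases q)
  obtain a1 a2 where a: "a = Complex a1 a2" by (cases a)
  obtain b1 b2 where b: "b = Complex b1 b2" by (cases b)
  obtain c1 c2 where c: "c = Complex c1 c2" by (cases c)
  obtain d1 d2 where d: "d = Complex d1 d2" by (cases d)
  have "(norm (qmul p q))^2 = (norm p * norm q)^2"
    by (simp add: p q a b c d qmul_def norm_Pair cmod_power2 power_mult_distrib)
       (simp add: power2_eq_square algebra_simps)
  then show ?thesis by (simp add: power2_eq_iff_nonneg)
qed

lemma norm_sphere: "J \<in> qsphere \<Longrightarrow> norm J = 1"
proof -
  assume J: "J \<in> qsphere"
  have "J = sl J \<i>" by (simp add: sl_eq)
  then show ?thesis using norm_sl[OF J, of \<i>] by simp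
qed

lemma inner_sl_Jsl:
  assumes I: "I \<in> qsphere" and J: "J \<in> qsphere"
  shows "inner (sl I p) (qmul J (sl I q)) = inner I J * (Im p * Re q - Re p * Im q)"
proof -
  obtain a b where Iab: "I = (a, b)" by (cases I)
  obtain a1 a2 where a: "a = Complex a1 a2" by (cases a)
  obtain b1 b2 where b: "b = Complex b1 b2" by (cases b)
  obtain c d where Jcd: "J = (c, d)" by (cases J)
  obtain c1 c2 where c: "c = Complex c1 c2" by (cases c)
  obtain d1 d2 where d: "d = Complex d1 d2" by (cases d)
  obtain p1 p2 where pp: "p = Complex p1 p2" by (cases p)
  obtain q1 q2 where qq: "q = Complex q1 q2" by (cases q)
  from I have a1: "a1 = 0" by (auto simp: qsphere_iff Iab a)
  from J have c1: "c1 = 0" by (auto simp: qsphere_iff Jcd c)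
  show ?thesis
    by (simp add: Iab a b Jcd c d pp qq a1 c1 sl_eq qone_def qmul_def inner_complex_def)
       (simp add: algebra_simps)
qed

lemma norm_slJsl_sq:
  assumes I: "I \<in> qsphere" and J: "J \<in> qsphere"
  shows "(norm (sl I p + qmul J (sl I q)))^2 =
     (cmod p)^2 + (cmod q)^2 + 2 * inner I J * (Im p * Re q - Re p * Im q)"
proof -
  have "(norm (sl I p + qmul J (sl I q)))^2 = (norm (sl I p))^2 + (norm (qmul J (sl I q)))^2
        + 2 * inner (sl I p) (qmul J (sl I q))"
    by (simp add: power2_norm_eq_inner inner_add_left inner_add_right inner_commute)
  also have "\<dots> = (cmod p)^2 + (cmod q)^2 + 2 * inner I J * (Im p * Re q - Re p * Im q)"
    by (simp add: inner_sl_Jsl[OF I J] norm_qmul norm_sphere[OF J] norm_sl[OF I])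
  finally show ?thesis .
qed

definition Rep :: "quat \<Rightarrow> quat \<Rightarrow> complex \<Rightarrow> complex \<Rightarrow> quat" where
  "Rep I J u v = sl I ((u + v) / 2) + qmul J (sl I (- \<i> * (u - v) / 2))"

lemma norm_Rep:
  assumes I: "I \<in> qsphere" and J: "J \<in> qsphere" and u: "cmod u < 1" and v: "cmod v < 1"
  shows "norm (Rep I J u v) < 1"
proof -
  define P where "P = (u + v) / 2"
  define Q where "Q = - \<i> * (u - v) / 2"
  define t where "t = Im P * Re Q - Re P * Im Q"
  have RP: "Re P = (Re u + Re v) / 2" "Im P = (Im u + Im v) / 2"
    "Re Q = (Im u - Im v) / 2" "Im Q = (Re v - Re u) / 2"
    by (simp_all add: P_def Q_def field_simps)
  have hu: "(cmod u)^2 = (cmod P)^2 + (cmod Q)^2 + 2 * t"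
    unfolding cmod_power2 t_def RP by (simp add: power2_eq_square field_simps)
  have hv: "(cmod v)^2 = (cmod P)^2 + (cmod Q)^2 - 2 * t"
    unfolding cmod_power2 t_def RP by (simp add: power2_eq_square field_simps)
  have c: "\<bar>inner I J\<bar> \<le> 1"
    using Cauchy_Schwarz_ineq2[of I J] by (simp add: norm_sphere I J)
  have ct: "inner I J * t \<le> \<bar>t\<bar>"
  proof -
    have "inner I J * t \<le> \<bar>inner I J * t\<bar>" by simp
    also have "\<dots> = \<bar>inner I J\<bar> * \<bar>t\<bar>" by (simp add: abs_mult)
    also have "\<dots> \<le> \<bar>t\<bar>" using c by (simp add: mult_left_le_one_le)
    finally show ?thesis .
  qed
  have u2: "(cmod u)^2 < 1" using u by (simp add: power_less_one_iff)
  have v2: "(cmod v)^2 < 1" using v by (simp add: power_less_one_iff)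
  have "(norm (Rep I J u v))^2 = (cmod P)^2 + (cmod Q)^2 + 2 * inner I J * t"
    unfolding Rep_def P_def[symmetric] Q_def[symmetric] t_def
    by (rule norm_slJsl_sq[OF I J])
  also have "\<dots> < 1" using ct hu hv u2 v2 by (cases "t \<ge> 0") auto
  finally show ?thesis by (simp add: power_less_one_iff)
qed

lemma Rep_sl_mult:
  assumes I: "I \<in> qsphere" and J: "J \<in> qsphere"
  shows "qmul (sl J w) (sl I c) = Rep I J (w * c) (cnj w * c)"
proof -
  have e1: "(w * c + cnj w * c) / 2 = complex_of_real (Re w) * c"
    by (simp add: complex_eq_iff)
  have e2: "- \<i> * (w * c - cnj w * c) / 2 = complex_of_real (Im w) * c"
    by (simp add: complex_eq_iff algebra_simps)
  show ?thesis
    unfolding Rep_def e1 e2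
    by (simp add: sl_scale sl_eq[of J w] qmul_add_left qmul_scaleR_left
        qmul_scaleR_right)
qed

lemma Rep_mult_sl:
  assumes I: "I \<in> qsphere"
  shows "qmul (Rep I J u v) (sl I a) = Rep I J (u * a) (v * a)"
  by (simp add: Rep_def qmul_add_left qmul_assoc sl_mult[OF I] algebra_simps)

lemma Rep_same:
  assumes I: "I \<in> qsphere"
  shows "Rep I I u v = sl I u"
proof -
  have "Rep I I u v = sl I ((u + v) / 2 + \<i> * (- \<i> * (u - v) / 2))"
    unfolding Rep_def qmul_J_sl[OF I] sl_add[symmetric] by (rule refl)
  also have "(u + v) / 2 + \<i> * (- \<i> * (u - v) / 2) = u"
    by (auto simp: complex_eq_iff field_simps)
  finally show ?thesis .
qed

lemma Rep_CR:
  assumes J: "J \<in> qsphere"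
  shows "Rep I J u v + qmul J (Rep I J (u * \<i>) (- (v * \<i>))) = 0"
proof -
  have "Rep I J u v + qmul J (Rep I J (u * \<i>) (- (v * \<i>))) =
     sl I ((u + v) / 2) + qmul J (sl I (- \<i> * (u - v) / 2))
     + qmul J (sl I ((u * \<i> + - (v * \<i>)) / 2)) - sl I (- \<i> * (u * \<i> - - (v * \<i>)) / 2)"
    by (simp add: Rep_def qmul_add_right qsphere_sq2[OF J])
  also have "\<dots> = qmul J (sl I (- \<i> * (u - v) / 2 + (u * \<i> + - (v * \<i>)) / 2))
     + sl I ((u + v) / 2 - - \<i> * (u * \<i> - - (v * \<i>)) / 2)"
    by (simp add: sl_add sl_diff qmul_add_right algebra_simps)
  also have "- \<i> * (u - v) / 2 + (u * \<i> + - (v * \<i>)) / 2 = 0"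
    by (simp add: field_simps)
  also have "(u + v) / 2 - - \<i> * (u * \<i> - - (v * \<i>)) / 2 = 0"
    by (simp add: field_simps)
  finally show ?thesis by simp
qed

lemma linear_qmul_right: "linear (qmul J)"
  by (rule linearI) (simp_all add: qmul_add_right qmul_scaleR_right)

lemma bounded_linear_qmul_right: "bounded_linear (qmul J)"
  using linear_qmul_right linear_conv_bounded_linear by blast

lemma Rep_sums:
  assumes "u sums U" and "v sums V"
  shows "(\<lambda>n. Rep I J (u n) (v n)) sums Rep I J U V"
proof -
  have 1: "(\<lambda>n. (u n + v n) / 2) sums ((U + V) / 2)"
    by (intro sums_divide sums_add assms)
  have 2: "(\<lambda>n. - \<i> * (u n - v n) / 2) sums (- \<i> * (U - V) / 2)"
    by (intro sums_divide sums_mult sums_diff assms)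
  have bl: "bounded_linear (\<lambda>x. qmul J (sl I x))"
    by (rule bounded_linear_compose[OF bounded_linear_qmul_right bounded_linear_sl])
  show ?thesis unfolding Rep_def
    by (intro sums_add bounded_linear.sums[OF bounded_linear_sl 1] bounded_linear.sums[OF bl 2])
qed

lemma Rep_add: "Rep I J (u1 + u2) (v1 + v2) = Rep I J u1 v1 + Rep I J u2 v2"
proof -
  have "Rep I J u1 v1 + Rep I J u2 v2 = sl I ((u1+v1)/2 + (u2+v2)/2)
     + qmul J (sl I (- \<i> * (u1 - v1) / 2 + - \<i> * (u2 - v2) / 2))"
    by (simp only: Rep_def sl_add qmul_add_right add_ac)
  also have "(u1+v1)/2 + (u2+v2)/2 = (u1 + u2 + (v1 + v2)) / 2" by (simp add: field_simps)
  also have "- \<i> * (u1 - v1) / 2 + - \<i> * (u2 - v2) / 2 = - \<i> * (u1 + u2 - (v1 + v2)) / 2"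
    by (simp add: field_simps)
  finally show ?thesis by (simp only: Rep_def)
qed

lemma Rep_scaleR: "Rep I J (r *\<^sub>R u) (r *\<^sub>R v) = r *\<^sub>R Rep I J u v"
proof -
  have "r *\<^sub>R Rep I J u v = sl I (complex_of_real r * ((u + v) / 2))
      + qmul J (sl I (complex_of_real r * (- \<i> * (u - v) / 2)))"
    by (simp only: Rep_def sl_scale qmul_scaleR_right scaleR_add_right)
  also have "complex_of_real r * ((u + v) / 2) = (r *\<^sub>R u + r *\<^sub>R v) / 2"
    by (simp add: scaleR_conv_of_real field_simps)
  also have "complex_of_real r * (- \<i> * (u - v) / 2) = - \<i> * (r *\<^sub>R u - r *\<^sub>R v) / 2"
    by (simp add: scaleR_conv_of_real field_simps)
  finally show ?thesis by (simp only: Rep_def)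
qed

lemma bounded_linear_Rep: "bounded_linear (\<lambda>p. Rep I J (fst p) (snd p))"
proof -
  have "linear (\<lambda>p. Rep I J (fst p) (snd p))"
    by (rule linearI) (simp_all add: Rep_add Rep_scaleR)
  then show ?thesis using linear_conv_bounded_linear by blast
qed



definition Ef :: "quat \<Rightarrow> complex fps \<Rightarrow> quat \<Rightarrow> quat" where
  "Ef I F q = (\<Sum>k. qmul (qpow q k) (sl I (fps_nth F k)))"

lemma Ef_sums_sl:
  assumes I: "I \<in> qsphere" and J: "J \<in> qsphere" and F: "1 \<le> fps_conv_radius F" and z: "cmod z < 1"
  shows "(\<lambda>k. qmul (qpow (sl J z) k) (sl I (fps_nth F k))) sums
           Rep I J (eval_fps F z) (eval_fps F (cnj z))"
proof -
  have z1: "ereal (norm z) < fps_conv_radius F" using F z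
    using order_less_le_trans[OF _ F, of "ereal (cmod z)"] z by simp
  have z2: "ereal (norm (cnj z)) < fps_conv_radius F" using z1 by simp
  have eq: "qmul (qpow (sl J z) k) (sl I (fps_nth F k)) =
        Rep I J (fps_nth F k * z ^ k) (fps_nth F k * cnj z ^ k)" for k
    by (simp add: sl_pow[OF J] Rep_sl_mult[OF I J] mult.commute)
  show ?thesis unfolding eq
    by (intro Rep_sums sums_eval_fps z1 z2)
qed

lemma Ef_sl:
  assumes I: "I \<in> qsphere" and J: "J \<in> qsphere" and F: "1 \<le> fps_conv_radius F" and z: "cmod z < 1"
  shows "Ef I F (sl J z) = Rep I J (eval_fps F z) (eval_fps F (cnj z))"
  unfolding Ef_def using Ef_sums_sl[OF assms] by (rule sums_unique[symmetric])

lemma qim_eq: "qim q = (Complex 0 (Im (fst q)), snd q)"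
  by (cases q) (simp add: qim_def qreal_def qre_def complex_eq_iff)

lemma decomp:
  fixes q :: quat
  assumes I: "I \<in> qsphere"
  defines "x \<equiv> qre q" and "y \<equiv> norm (qim q)"
  defines "J \<equiv> (if y = 0 then I else (1 / y) *\<^sub>R qim q)"
  shows "J \<in> qsphere" "q = sl J (Complex x y)" "cmod (Complex x y) = norm q"
proof -
  obtain a b where q: "q = (a, b)" by (cases q)
  have y2: "y^2 = (Im a)^2 + (cmod b)^2"
    by (simp add: y_def qim_eq q norm_Pair cmod_power2)
  have qx: "q = qreal x + qim q" by (simp add: qim_def x_def)
  show "J \<in> qsphere"
  proof (cases "y = 0")
    case True then show ?thesis by (simp add: J_def I)
  next
    case False
    then have yp: "y > 0" by (simp add: y_def)
    have "(cmod (fst J))^2 + (cmod (snd J))^2 = ((Im a)^2 + (cmod b)^2) / y^2"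
      using False by (simp add: J_def qim_eq q cmod_power2 power_divide add_divide_distrib)
    also have "\<dots> = 1" using False by (simp add: y2[symmetric])
    finally show ?thesis using False by (simp add: qsphere_iff J_def qim_eq q)
  qed
  show "q = sl J (Complex x y)"
  proof (cases "y = 0")
    case True
    then have "qim q = 0" by (simp add: y_def)
    then show ?thesis using qx True by (simp add: sl_def slice_def)
  next
    case False
    then show ?thesis using qx by (simp add: sl_def slice_def J_def)
  qed
  show "cmod (Complex x y) = norm q"
  proof -
    have "(cmod (Complex x y))^2 = (norm q)^2"
      by (simp add: cmod_power2 y2 x_def qre_def q norm_Pair)
    then show ?thesis by (simp add: power2_eq_iff_nonneg)
  qed
qed

lemma ball_sl_iff: "J \<in> qsphere \<Longrightarrow> sl J z \<in> qball \<longleftrightarrow> cmod z < 1"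
  by (simp add: qball_def norm_sl)

lemma Ef_sums:
  assumes I: "I \<in> qsphere" and F: "1 \<le> fps_conv_radius F" and q: "q \<in> qball"
  shows "(\<lambda>k. qmul (qpow q k) (sl I (fps_nth F k))) sums Ef I F q"
proof -
  note d = decomp[OF I, of q]
  let ?z = "Complex (qre q) (norm (qim q))"
  let ?J = "(if norm (qim q) = 0 then I else (1 / norm (qim q)) *\<^sub>R qim q)"
  have z: "cmod ?z < 1" using q d(3) by (simp add: qball_def)
  have "(\<lambda>k. qmul (qpow (sl ?J ?z) k) (sl I (fps_nth F k))) sums Ef I F (sl ?J ?z)"
    unfolding Ef_def using Ef_sums_sl[OF I d(1) F z] by (simp add: sums_iff)
  then show ?thesis using d(2) by simp
qed

lemma Rep_alt:
  assumes I: "I \<in> qsphere"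
  shows "Rep I J u v = (1/2) *\<^sub>R (sl I u + sl I v) + (1/2) *\<^sub>R qmul (qmul J I) (sl I v - sl I u)"
proof -
  have e1: "(1/2) *\<^sub>R (sl I u + sl I v) = sl I (complex_of_real (1/2) * (u + v))"
    by (simp only: sl_add[symmetric] sl_scale)
  have e2: "(1/2) *\<^sub>R qmul (qmul J I) (sl I v - sl I u) =
        qmul J (sl I (complex_of_real (1/2) * (\<i> * (v - u))))"
    by (simp only: sl_diff[symmetric] qmul_assoc qmul_J_sl[OF I] sl_scale qmul_scaleR_right)
  have "(1/2) *\<^sub>R (sl I u + sl I v) + (1/2) *\<^sub>R qmul (qmul J I) (sl I v - sl I u) =
        sl I (complex_of_real (1/2) * (u + v)) + qmul J (sl I (complex_of_real (1/2) * (\<i> * (v - u))))"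
    by (simp only: e1 e2)
  also have "complex_of_real (1/2) * (u + v) = (u + v) / 2" by simp
  also have "complex_of_real (1/2) * (\<i> * (v - u)) = - \<i> * (u - v) / 2"
    by (simp add: field_simps)
  finally show ?thesis by (simp add: Rep_def)
qed

lemma Ef_regext:
  assumes I: "I \<in> qsphere" and F: "1 \<le> fps_conv_radius F" and q: "q \<in> qball"
    and G: "\<And>w. cmod w < 1 \<Longrightarrow> G (sl I w) = sl I (eval_fps F w)"
  shows "Ef I F q = regext I G q"
proof -
  note d = decomp[OF I, of q]
  define z where "z = Complex (qre q) (norm (qim q))"
  define J where "J = (if norm (qim q) = 0 then I else (1 / norm (qim q)) *\<^sub>R qim q)"
  have z: "cmod z < 1" using q d(3) by (simp add: qball_def z_def)
  have z': "cmod (cnj z) < 1" using z by simp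
  have "Ef I F q = Ef I F (sl J z)" using d(2) by (simp add: z_def J_def)
  also have "\<dots> = Rep I J (eval_fps F z) (eval_fps F (cnj z))"
    by (rule Ef_sl[OF I d(1)[folded J_def] F z])
  also have "\<dots> = regext I G q"
  proof -
    have s1: "slice (qre q) (norm (qim q)) I = sl I z" by (simp add: slice_sl z_def)
    have cz: "cnj z = Complex (qre q) (- norm (qim q))" by (simp add: z_def complex_eq_iff)
    have s2: "slice (qre q) (- norm (qim q)) I = sl I (cnj z)" by (simp add: slice_sl cz)
    show ?thesis
      unfolding regext_def Let_def J_def[symmetric] s1 s2 G[OF z] G[OF z'] Rep_alt[OF I] by (rule refl)
  qed
  finally show ?thesis .
qed

lemma Ef_same:
  assumes I: "I \<in> qsphere" and F: "1 \<le> fps_conv_radius F" and z: "cmod z < 1"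
  shows "Ef I F (sl I z) = sl I (eval_fps F z)"
  using Ef_sl[OF I I F z] by (simp add: Rep_same[OF I])

lemma Ef_ball:
  assumes I: "I \<in> qsphere" and F: "1 \<le> fps_conv_radius F" and q: "q \<in> qball"
    and H: "\<And>w. cmod w < 1 \<Longrightarrow> cmod (eval_fps F w) < 1"
  shows "Ef I F q \<in> qball"
proof -
  note d = decomp[OF I, of q]
  define z where "z = Complex (qre q) (norm (qim q))"
  define J where "J = (if norm (qim q) = 0 then I else (1 / norm (qim q)) *\<^sub>R qim q)"
  have z: "cmod z < 1" using q d(3) by (simp add: qball_def z_def)
  have z': "cmod (cnj z) < 1" using z by simp
  have "Ef I F q = Rep I J (eval_fps F z) (eval_fps F (cnj z))"
    using d(2) Ef_sl[OF I d(1)[folded J_def] F z] by (simp add: z_def J_def)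
  then show ?thesis using norm_Rep[OF I d(1)[folded J_def] H[OF z] H[OF z']]
    by (simp add: qball_def)
qed



lemma powser_unique_real:
  fixes e :: "nat \<Rightarrow> real"
  assumes h: "\<And>x. \<bar>x\<bar> < 1 \<Longrightarrow> (\<lambda>k. e k * x ^ k) sums 0"
  shows "e m = 0"
proof (rule ccontr)
  assume em: "e m \<noteq> 0"
  have e0: "e 0 = 0" using h[of 0] by simp
  with em have m: "m > 0" by (cases m) auto
  have "\<exists>s. 0 < s \<and> (\<forall>z. z \<in> cball (0::real) s - {0} \<longrightarrow> (\<lambda>_. 0::real) z \<noteq> 0)"
    by (rule powser_0_nonzero[of 1 0 e "\<lambda>_. 0" m]) (use h em m in auto)
  then obtain s where s: "0 < s" and hs: "\<forall>z. z \<in> cball (0::real) s - {0} \<longrightarrow> (0::real) \<noteq> 0"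
    by auto
  have "s \<in> cball (0::real) s - {0}" using s by auto
  then show False using hs by blast
qed

lemma qpow_qreal: "qpow (qreal x) k = qreal (x ^ k)"
  by (induction k) (simp_all add: qone_def qreal_def qmul_def)

lemma qcoeff_unique:
  assumes ha: "\<And>x. \<bar>x\<bar> < 1 \<Longrightarrow> (\<lambda>k. qmul (qpow (qreal x) k) (a k)) sums s x"
    and hb: "\<And>x. \<bar>x\<bar> < 1 \<Longrightarrow> (\<lambda>k. qmul (qpow (qreal x) k) (b k)) sums s x"
  shows "a = b"
proof
  fix m
  define d where "d k = a k - b k" for k
  have hd: "(\<lambda>k. x ^ k *\<^sub>R d k) sums 0" if x: "\<bar>x\<bar> < 1" for x
    using sums_diff[OF ha[OF x] hb[OF x]]
    by (simp add: d_def qpow_qreal qmul_qreal_left scaleR_diff_right)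
  have coord: "l (d m) = 0" if bl: "bounded_linear l" for l :: "quat \<Rightarrow> real"
  proof -
    have "(\<lambda>k. l (d k) * x ^ k) sums 0" if x: "\<bar>x\<bar> < 1" for x
      using bounded_linear.sums[OF bl hd[OF x]]
      by (simp add: linear_simps[OF bl] mult.commute)
    then show ?thesis by (rule powser_unique_real)
  qed
  have blf: "bounded_linear (\<lambda>q::quat. Re (fst q))" "bounded_linear (\<lambda>q::quat. Im (fst q))"
    "bounded_linear (\<lambda>q::quat. Re (snd q))" "bounded_linear (\<lambda>q::quat. Im (snd q))"
    by (intro bounded_linear_compose[OF bounded_linear_Re] bounded_linear_compose[OF bounded_linear_Im]
        bounded_linear_fst bounded_linear_snd)+
  have "d m = 0"
    using coord[OF blf(1)] coord[OF blf(2)] coord[OF blf(3)] coord[OF blf(4)]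
    by (simp add: prod_eq_iff complex_eq_iff)
  then show "a m = b m" by (simp add: d_def)
qed

lemma qreal_in_ball: "\<bar>x\<bar> < 1 \<Longrightarrow> qreal x \<in> qball"
  by (simp add: qball_def qreal_def norm_Pair)

lemma qcoeffs_Ef:
  assumes I: "I \<in> qsphere" and F: "1 \<le> fps_conv_radius F" and g: "\<And>q. q \<in> qball \<Longrightarrow> g q = Ef I F q"
  shows "qcoeffs g = (\<lambda>k. sl I (fps_nth F k))"
proof -
  define P where "P a \<longleftrightarrow> (\<forall>q\<in>qball. (\<lambda>n. qmul (qpow q n) (a n)) sums g q)" for a
  have P1: "P (\<lambda>k. sl I (fps_nth F k))"
    unfolding P_def using Ef_sums[OF I F] g by simp
  have P2: "P (qcoeffs g)"
    unfolding qcoeffs_def P_def[symmetric] by (rule someI[of P, OF P1])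
  show ?thesis
  proof (rule qcoeff_unique[where s = "\<lambda>x. g (qreal x)"])
    fix x :: real assume x: "\<bar>x\<bar> < 1"
    have xb: "qreal x \<in> qball" using x by (rule qreal_in_ball)
    show "(\<lambda>k. qmul (qpow (qreal x) k) (qcoeffs g k)) sums g (qreal x)"
      using P2 xb unfolding P_def by blast
    show "(\<lambda>k. qmul (qpow (qreal x) k) (sl I (fps_nth F k))) sums g (qreal x)"
      using P1 xb unfolding P_def by blast
  qed
qed

lemma star_pow_coeffs_sl:
  assumes I: "I \<in> qsphere"
  shows "star_pow_coeffs (\<lambda>k. sl I (fps_nth F k)) n = (\<lambda>k. sl I (fps_nth (F ^ n) k))"
proof (induction n)
  case 0
  then show ?case by (auto simp: fun_eq_iff qone_def)
next
  case (Suc n)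
  show ?case
    by (simp add: Suc fun_eq_iff star_coeffs_def fps_mult_nth sl_mult[OF I] sl_sum atLeast0AtMost)
qed

lemma radius_power: "1 \<le> fps_conv_radius F \<Longrightarrow> 1 \<le> fps_conv_radius (F ^ n)"
  by (erule order_trans[OF _ fps_conv_radius_power])

lemma star_pow_Ef:
  assumes I: "I \<in> qsphere" and F: "1 \<le> fps_conv_radius F" and g: "\<And>q. q \<in> qball \<Longrightarrow> g q = Ef I F q"
  shows "star_pow g n q = Ef I (F ^ n) q"
proof -
  have c: "qcoeffs g = (\<lambda>k. sl I (fps_nth F k))" by (rule qcoeffs_Ef[OF I F g])
  show ?thesis unfolding star_pow_def pseries_def c star_pow_coeffs_sl[OF I] Ef_def by (rule refl)
qed

lemma eval_power_disk:
  assumes F: "1 \<le> fps_conv_radius F" and z: "cmod z < 1"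
  shows "eval_fps (F ^ n) z = eval_fps F z ^ n"
proof -
  have "ereal (norm z) < fps_conv_radius F" using F z
    using order_less_le_trans[OF _ F, of "ereal (cmod z)"] z by simp
  then show ?thesis by (rule eval_fps_power)
qed



definition Cx :: "real \<times> real \<Rightarrow> complex" where "Cx p = Complex (fst p) (snd p)"

lemma bounded_linear_Cx: "bounded_linear Cx"
proof -
  have "linear Cx"
    by (rule linearI) (simp_all add: Cx_def complex_eq_iff)
  then show ?thesis using linear_conv_bounded_linear by blast
qed

lemma bounded_linear_cnjCx: "bounded_linear (\<lambda>p. cnj (Cx p))"
  by (rule bounded_linear_compose[OF bounded_linear_cnj bounded_linear_Cx])

lemma slice_Cx: "slice x y J = sl J (Cx (x, y))"
  by (simp add: sl_def Cx_def)

lemma O_eq: "J \<in> qsphere \<Longrightarrow> {(x, y). slice x y J \<in> qball} = {p. cmod (Cx p) < 1}"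
  by (auto simp: slice_Cx ball_sl_iff)

lemma open_O: "open {p. cmod (Cx p) < 1}"
proof -
  have "{p. cmod (Cx p) < 1} = Cx -` ball 0 1" by auto
  moreover have "open (Cx -` ball 0 1)"
    by (rule continuous_open_vimage[OF open_ball])
       (simp add: linear_continuous_at[OF bounded_linear_Cx])
  ultimately show ?thesis by simp
qed

lemma radius_lt:
  assumes F: "1 \<le> fps_conv_radius F" and z: "cmod z < 1"
  shows "ereal (cmod z) < fps_conv_radius F"
  using order_less_le_trans[OF _ F, of "ereal (cmod z)"] z by simp

lemma radius_deriv: "1 \<le> fps_conv_radius F \<Longrightarrow> 1 \<le> fps_conv_radius (fps_deriv (F :: complex fps))"
  by (erule order_trans[OF _ fps_conv_radius_deriv])

lemma slice_regular_Ef: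
  assumes I: "I \<in> qsphere" and F: "1 \<le> fps_conv_radius F"
  shows "slice_regular qball (Ef I F)"
  unfolding slice_regular_def
proof
  fix J assume J: "J \<in> qsphere"
  define H where "H = eval_fps F"
  define H' where "H' = eval_fps (fps_deriv F)"
  define D where "D p d = Rep I J (H' (Cx p) * Cx d) (H' (cnj (Cx p)) * cnj (Cx d))" for p d
  have F': "1 \<le> fps_conv_radius (fps_deriv F)" by (rule radius_deriv[OF F])
  have HD: "(H has_derivative (\<lambda>x. H' w * x)) (at w)" if w: "cmod w < 1" for w
    using has_field_derivative_eval_fps[OF radius_lt[OF F w], of UNIV]
    by (simp add: H_def H'_def has_field_derivative_def)
  note O = O_eq[OF J]
  have der: "((\<lambda>(x, y). Ef I F (slice x y J)) has_derivative D p) (at p)"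
    if p: "p \<in> {(x, y). slice x y J \<in> qball}" for p
  proof -
    have p1: "cmod (Cx p) < 1" using p O by auto
    have p2: "cmod (cnj (Cx p)) < 1" using p1 by simp
    have f1: "((\<lambda>p. H (Cx p)) has_derivative (\<lambda>d. H' (Cx p) * Cx d)) (at p)"
      by (rule has_derivative_compose[OF bounded_linear_imp_has_derivative[OF bounded_linear_Cx] HD[OF p1]])
    have f2: "((\<lambda>p. H (cnj (Cx p))) has_derivative (\<lambda>d. H' (cnj (Cx p)) * cnj (Cx d))) (at p)"
      by (rule has_derivative_compose[OF bounded_linear_imp_has_derivative[OF bounded_linear_cnjCx] HD[OF p2]])
    have f3: "((\<lambda>p. Rep I J (H (Cx p)) (H (cnj (Cx p)))) has_derivative D p) (at p)"
      using has_derivative_compose[OF has_derivative_Pair[OF f1 f2]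
          bounded_linear_imp_has_derivative[OF bounded_linear_Rep[of I J]]]
      by (simp add: D_def[abs_def])
    show ?thesis
    proof (rule has_derivative_transform_within_open[OF f3 open_O])
      show "p \<in> {p. cmod (Cx p) < 1}" using p1 by simp
      fix p' assume p': "p' \<in> {p. cmod (Cx p) < 1}"
      obtain a b where ab: "p' = (a, b)" by (cases p')
      show "Rep I J (H (Cx p')) (H (cnj (Cx p'))) = (\<lambda>(x, y). Ef I F (slice x y J)) p'"
        using p' Ef_sl[OF I J F, of "Cx p'"] by (simp add: ab slice_Cx H_def)
    qed
  qed
  have cont: "continuous_on {(x, y). slice x y J \<in> qball} (\<lambda>p. D p d)" for d
  proof -
    have c1: "continuous_on {p. cmod (Cx p) < 1} (\<lambda>p. (H' (Cx p) * Cx d, H' (cnj (Cx p)) * cnj (Cx d)))"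
      unfolding H'_def
      by (intro continuous_intros linear_continuous_on bounded_linear_Cx bounded_linear_cnjCx)
         (auto intro: order_less_le_trans[OF _ F'] simp: order_less_le_trans[OF _ F'])
    show ?thesis unfolding O D_def
      using continuous_on_compose2[OF linear_continuous_on[OF bounded_linear_Rep[of I J], of UNIV] c1]
      by simp
  qed
  have CR: "D p (1, 0) + qmul J (D p (0, 1)) = 0" for p
  proof -
    have "Cx (1, 0) = 1" "Cx (0, 1) = \<i>" by (simp_all add: Cx_def complex_eq_iff)
    then show ?thesis using Rep_CR[OF J, of I "H' (Cx p)" "H' (cnj (Cx p))"]
      by (simp add: D_def)
  qed
  show "\<exists>D. (\<forall>p\<in>{(x, y). slice x y J \<in> qball}. ((\<lambda>(x, y). Ef I F (slice x y J)) has_derivative D p) (at p)) \<and>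
          continuous_on {(x, y). slice x y J \<in> qball} (\<lambda>p. D p (1, 0)) \<and>
          continuous_on {(x, y). slice x y J \<in> qball} (\<lambda>p. D p (0, 1)) \<and>
          (\<forall>p\<in>{(x, y). slice x y J \<in> qball}. D p (1, 0) + qmul J (D p (0, 1)) = 0)"
    using der cont CR by blast
qed

lemma slice_regular_cong:
  assumes reg: "slice_regular qball g" and eq: "\<And>q. q \<in> qball \<Longrightarrow> g q = g' q"
  shows "slice_regular qball g'"
  unfolding slice_regular_def
proof
  fix J assume J: "J \<in> qsphere"
  obtain D where der: "\<forall>p\<in>{(x, y). slice x y J \<in> qball}. ((\<lambda>(x, y). g (slice x y J)) has_derivative D p) (at p)"
    and rest: "continuous_on {(x, y). slice x y J \<in> qball} (\<lambda>p. D p (1, 0))"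
          "continuous_on {(x, y). slice x y J \<in> qball} (\<lambda>p. D p (0, 1))"
          "\<forall>p\<in>{(x, y). slice x y J \<in> qball}. D p (1, 0) + qmul J (D p (0, 1)) = 0"
    using reg J unfolding slice_regular_def by blast
  have op: "open {(x, y). slice x y J \<in> qball}" using O_eq[OF J] open_O by simp
  have "((\<lambda>(x, y). g' (slice x y J)) has_derivative D p) (at p)"
    if p: "p \<in> {(x, y). slice x y J \<in> qball}" for p
  proof (rule has_derivative_transform_within_open[OF _ op p])
    show "((\<lambda>(x, y). g (slice x y J)) has_derivative D p) (at p)" using der p by blast
    fix p' assume "p' \<in> {(x, y). slice x y J \<in> qball}"
    then show "(\<lambda>(x, y). g (slice x y J)) p' = (\<lambda>(x, y). g' (slice x y J)) p'"
      using eq by (cases p') auto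
  qed
  then show "\<exists>D. (\<forall>p\<in>{(x, y). slice x y J \<in> qball}. ((\<lambda>(x, y). g' (slice x y J)) has_derivative D p) (at p)) \<and>
          continuous_on {(x, y). slice x y J \<in> qball} (\<lambda>p. D p (1, 0)) \<and>
          continuous_on {(x, y). slice x y J \<in> qball} (\<lambda>p. D p (0, 1)) \<and>
          (\<forall>p\<in>{(x, y). slice x y J \<in> qball}. D p (1, 0) + qmul J (D p (0, 1)) = 0)"
    using rest by blast
qed



lemma slice_holo:
  fixes l :: "quat \<Rightarrow> real"
  assumes J: "J \<in> qsphere" and bl: "bounded_linear l"
   and der: "\<forall>p\<in>{(x, y). slice x y J \<in> qball}. ((\<lambda>(x, y). f (slice x y J)) has_derivative D p) (at p)"
   and CR: "\<forall>p\<in>{(x, y). slice x y J \<in> qball}. D p (1, 0) + qmul J (D p (0, 1)) = 0"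
  shows "(\<lambda>z. complex_of_real (l (f (sl J z))) - \<i> * complex_of_real (l (qmul J (f (sl J z)))))
           holomorphic_on ball 0 1"
proof -
  define K where "K q = complex_of_real (l q) - \<i> * complex_of_real (l (qmul J q))" for q
  define T where "T z = (Re z, Im z)" for z :: complex
  define G where "G = (\<lambda>(x, y). f (slice x y J))"
  have blK: "bounded_linear K"
  proof -
    have "linear K"
      by (rule linearI)
         (simp_all add: K_def qmul_add_right qmul_scaleR_right linear_simps[OF bl] algebra_simps
           scaleR_conv_of_real)
    then show ?thesis using linear_conv_bounded_linear by blast
  qed
  have blT: "bounded_linear T"
  proof -
    have "linear T" by (rule linearI) (simp_all add: T_def)
    then show ?thesis using linear_conv_bounded_linear by blast
  qed
  show ?thesis
  proof (subst holomorphic_on_open[OF open_ball], intro ballI)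
    fix z :: complex assume z: "z \<in> ball 0 1"
    define p where "p = T z"
    have pO: "p \<in> {(x, y). slice x y J \<in> qball}"
      using z by (simp add: p_def T_def slice_sl ball_sl_iff[OF J])
    have dG: "(G has_derivative D p) (at p)" using der pO unfolding G_def by blast
    have lin: "linear (D p)" using has_derivative_bounded_linear[OF dG] bounded_linear.linear by blast
    have d1: "((\<lambda>w. K (G (T w))) has_derivative (\<lambda>w. K (D p (T w)))) (at z)"
      by (rule has_derivative_compose[OF has_derivative_compose[OF bounded_linear_imp_has_derivative[OF blT]]
            bounded_linear_imp_has_derivative[OF blK]]) (use dG in \<open>simp add: p_def\<close>)
    define c where "c = K (D p (1, 0))"
    have "D p (1, 0) + qmul J (D p (0, 1)) = 0" using CR pO by blast
    then have CRp: "D p (1, 0) = - qmul J (D p (0, 1))" by (simp add: eq_neg_iff_add_eq_0)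
    have KD2: "K (D p (0, 1)) = \<i> * c"
      by (simp add: c_def K_def CRp qmul_minus_right qsphere_sq2[OF J] linear_simps[OF bl] algebra_simps)
    have Tw: "T w = Re w *\<^sub>R (1, 0) + Im w *\<^sub>R (0, 1)" for w by (simp add: T_def)
    have eq: "K (D p (T w)) = c * w" for w
    proof -
      have "D p (T w) = Re w *\<^sub>R D p (1, 0) + Im w *\<^sub>R D p (0, 1)"
        by (subst Tw) (simp only: linear_add[OF lin] linear_scale[OF lin])
      then have "K (D p (T w)) = Re w *\<^sub>R c + Im w *\<^sub>R K (D p (0, 1))"
        by (simp add: c_def linear_simps[OF blK])
      also have "\<dots> = c * w" by (simp add: KD2 scaleR_conv_of_real complex_eq_iff algebra_simps)
      finally show ?thesis .
    qed
    have hfun: "(\<lambda>w. K (G (T w))) = (\<lambda>z. complex_of_real (l (f (sl J z))) - \<i> * complex_of_real (l (qmul J (f (sl J z)))))"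
      by (simp add: fun_eq_iff K_def G_def T_def sl_def)
    show "\<exists>f'. ((\<lambda>z. complex_of_real (l (f (sl J z))) - \<i> * complex_of_real (l (qmul J (f (sl J z)))))
            has_field_derivative f') (at z)"
      using d1 unfolding hfun eq has_field_derivative_def by blast
  qed
qed



lemma islimpt_reals: "(0::complex) islimpt (complex_of_real ` {-1<..<1})"
  unfolding islimpt_approachable
proof (intro allI impI)
  fix e :: real assume e: "e > 0"
  define t where "t = min (e/2) (1/2)"
  have t: "t > 0" "t < 1" "t < e" using e by (auto simp: t_def)
  show "\<exists>x'\<in>complex_of_real ` {-1<..<1}. x' \<noteq> 0 \<and> dist x' 0 < e"
    using t by (intro bexI[of _ "complex_of_real t"]) auto
qed

lemma coord_eq:
  fixes p q :: quat
  assumes "\<And>l::quat \<Rightarrow> real. bounded_linear l \<Longrightarrow> l p = l q"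
  shows "p = q"
proof -
  have blf: "bounded_linear (\<lambda>q::quat. Re (fst q))" "bounded_linear (\<lambda>q::quat. Im (fst q))"
    "bounded_linear (\<lambda>q::quat. Re (snd q))" "bounded_linear (\<lambda>q::quat. Im (snd q))"
    by (intro bounded_linear_compose[OF bounded_linear_Re] bounded_linear_compose[OF bounded_linear_Im]
        bounded_linear_fst bounded_linear_snd)+
  show ?thesis
    using assms[OF blf(1)] assms[OF blf(2)] assms[OF blf(3)] assms[OF blf(4)]
    by (simp add: prod_eq_iff complex_eq_iff)
qed

lemma slice_ident:
  assumes J: "J \<in> qsphere" and rf: "slice_regular qball f" and rg: "slice_regular qball g"
    and re: "\<And>x. \<bar>x\<bar> < 1 \<Longrightarrow> f (qreal x) = g (qreal x)" and z: "cmod z < 1"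
  shows "f (sl J z) = g (sl J z)"
proof (rule coord_eq)
  fix l :: "quat \<Rightarrow> real" assume bl: "bounded_linear l"
  obtain Df where dfs: "\<forall>p\<in>{(x, y). slice x y J \<in> qball}. ((\<lambda>(x, y). f (slice x y J)) has_derivative Df p) (at p)"
    "\<forall>p\<in>{(x, y). slice x y J \<in> qball}. Df p (1, 0) + qmul J (Df p (0, 1)) = 0"
    using rf J unfolding slice_regular_def by blast
  obtain Dg where dgs: "\<forall>p\<in>{(x, y). slice x y J \<in> qball}. ((\<lambda>(x, y). g (slice x y J)) has_derivative Dg p) (at p)"
    "\<forall>p\<in>{(x, y). slice x y J \<in> qball}. Dg p (1, 0) + qmul J (Dg p (0, 1)) = 0"
    using rg J unfolding slice_regular_def by blast
  define d where "d z = (complex_of_real (l (f (sl J z))) - \<i> * complex_of_real (l (qmul J (f (sl J z)))))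
     - (complex_of_real (l (g (sl J z))) - \<i> * complex_of_real (l (qmul J (g (sl J z)))))" for z
  have hol: "d holomorphic_on ball 0 1"
    unfolding d_def
    by (intro holomorphic_on_diff slice_holo[OF J bl dfs(1) dfs(2)] slice_holo[OF J bl dgs(1) dgs(2)])
  have "d z = 0"
  proof (rule analytic_continuation[OF hol open_ball connected_ball _ _ islimpt_reals])
    show "complex_of_real ` {-1<..<1} \<subseteq> ball 0 1" by auto
    show "(0::complex) \<in> ball 0 1" by simp
    show "z \<in> ball 0 1" using z by simp
    fix w assume "w \<in> complex_of_real ` {-1<..<1}"
    then obtain x where x: "w = complex_of_real x" "\<bar>x\<bar> < 1" by auto
    show "d w = 0" using re[OF x(2)] by (simp add: d_def x(1))
  qed
  moreover have "Re (d z) = l (f (sl J z)) - l (g (sl J z))" by (simp add: d_def)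
  ultimately show "l (f (sl J z)) = l (g (sl J z))" by simp
qed

definition Tay :: "(complex \<Rightarrow> complex) \<Rightarrow> complex fps" where
  "Tay g = Abs_fps (\<lambda>n. (deriv ^^ n) g 0 / fact n)"

lemma Tay:
  assumes hol: "g holomorphic_on ball 0 1"
  shows "1 \<le> fps_conv_radius (Tay g)" "\<And>z. cmod z < 1 \<Longrightarrow> eval_fps (Tay g) z = g z"
proof -
  have s: "(\<lambda>n. fps_nth (Tay g) n * w ^ n) sums g w" if w: "cmod w < 1" for w
    using holomorphic_power_series[OF hol, of w] w by (simp add: Tay_def)
  show "1 \<le> fps_conv_radius (Tay g)"
    unfolding fps_conv_radius_def
  proof (rule conv_radius_geI_ex')
    fix r :: real assume r: "0 < r" "ereal r < 1"
    then show "summable (\<lambda>n. fps_nth (Tay g) n * complex_of_real r ^ n)"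
      using s[of "complex_of_real r"] by (auto simp: sums_iff)
  qed
  fix z :: complex assume z: "cmod z < 1"
  show "eval_fps (Tay g) z = g z" unfolding eval_fps_def using s[OF z] by (simp add: sums_iff)
qed

lemma comp_step:
  assumes I: "I \<in> qsphere"
    and A: "1 \<le> fps_conv_radius A" and f: "\<And>q. q \<in> qball \<Longrightarrow> f q = Ef I A q"
    and G: "1 \<le> fps_conv_radius G" and g: "\<And>q. q \<in> qball \<Longrightarrow> g q = Ef I G q"
    and Gmap: "\<And>w. cmod w < 1 \<Longrightarrow> cmod (eval_fps G w) < 1"
    and K: "1 \<le> fps_conv_radius K"
    and Keq: "\<And>w. cmod w < 1 \<Longrightarrow> eval_fps K w = eval_fps A (eval_fps G w)"
    and q: "q \<in> qball"
  shows "(\<lambda>k. qmul (star_pow g k q) (qcoeffs f k)) sums Ef I K q"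
proof -
  note d = decomp[OF I, of q]
  define z where "z = Complex (qre q) (norm (qim q))"
  define J where "J = (if norm (qim q) = 0 then I else (1 / norm (qim q)) *\<^sub>R qim q)"
  have J: "J \<in> qsphere" using d(1) by (simp add: J_def)
  have qz: "q = sl J z" using d(2) by (simp add: z_def J_def)
  have z: "cmod z < 1" using q d(3) by (simp add: qball_def z_def)
  have z': "cmod (cnj z) < 1" using z by simp
  have cf: "qcoeffs f = (\<lambda>k. sl I (fps_nth A k))" by (rule qcoeffs_Ef[OF I A f])
  have hterm: "qmul (star_pow g k q) (qcoeffs f k) =
     Rep I J (fps_nth A k * eval_fps G z ^ k) (fps_nth A k * eval_fps G (cnj z) ^ k)" for k
  proof -
    have "star_pow g k q = Ef I (G ^ k) (sl J z)" using star_pow_Ef[OF I G g] qz by simp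
    also have "\<dots> = Rep I J (eval_fps G z ^ k) (eval_fps G (cnj z) ^ k)"
      using Ef_sl[OF I J radius_power[OF G] z] eval_power_disk[OF G z] eval_power_disk[OF G z']
      by simp
    finally show ?thesis by (simp add: cf Rep_mult_sl[OF I] mult.commute)
  qed
  have "(\<lambda>k. Rep I J (fps_nth A k * eval_fps G z ^ k) (fps_nth A k * eval_fps G (cnj z) ^ k)) sums
        Rep I J (eval_fps A (eval_fps G z)) (eval_fps A (eval_fps G (cnj z)))"
    by (intro Rep_sums sums_eval_fps radius_lt[OF A] Gmap z z')
  also have "Rep I J (eval_fps A (eval_fps G z)) (eval_fps A (eval_fps G (cnj z))) = Ef I K q"
    using Ef_sl[OF I J K z] Keq[OF z] Keq[OF z'] qz by simp
  finally show ?thesis unfolding hterm .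
qed



theorem theorem5p2:
  fixes f :: "quat \<Rightarrow> quat" and I :: quat
  assumes reg: "slice_regular qball f"
    and self: "f ` qball \<subseteq> qball"
    and I: "I \<in> qsphere"
    and slice_pres: "f ` qballI I \<subseteq> qballI I"
  shows "\<forall>n\<ge>1.
           slice_regular qball (reg_iter f n) \<and>
           reg_iter f n ` qball \<subseteq> qball \<and>
           (\<forall>q\<in>qball. summable (\<lambda>k. qmul (star_pow (reg_iter f n) k q) (qcoeffs f k))) \<and>
           (\<forall>q\<in>qball. reg_iter f n q = regext I (f ^^ n) q)"
proof -
  define h where "h z = pI I (f (sl I z))" for z
  have fI: "f (sl I w) = sl I (h w) \<and> cmod (h w) < 1" if w: "cmod w < 1" for w
  proof -
    have "sl I w \<in> qball" using w ball_sl_iff[OF I] by simp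
    then have "sl I w \<in> qballI I" by (auto simp: qballI_def sl_def)
    then have "f (sl I w) \<in> qballI I" using slice_pres by blast
    then obtain x y where fx: "f (sl I w) \<in> qball" "f (sl I w) = slice x y I" unfolding qballI_def by blast
    then have e: "f (sl I w) = sl I (Complex x y)" by (simp add: slice_sl)
    then have hw: "h w = Complex x y" by (simp add: h_def pI_sl[OF I])
    show ?thesis using e hw fx(1) by (simp add: ball_sl_iff[OF I])
  qed
  have blqre: "bounded_linear qre"
    unfolding qre_def[abs_def] by (rule bounded_linear_compose[OF bounded_linear_Re bounded_linear_fst])
  have holh: "h holomorphic_on ball 0 1"
  proof -
    obtain D where ds: "\<forall>p\<in>{(x, y). slice x y I \<in> qball}. ((\<lambda>(x, y). f (slice x y I)) has_derivative D p) (at p)"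
      "\<forall>p\<in>{(x, y). slice x y I \<in> qball}. D p (1, 0) + qmul I (D p (0, 1)) = 0"
      using reg I unfolding slice_regular_def by blast
    show ?thesis
      by (rule holomorphic_transform[OF slice_holo[OF I blqre ds(1) ds(2)]])
         (simp add: h_def pI_def complex_eq_iff)
  qed
  have hn: "(h ^^ n) holomorphic_on ball 0 1 \<and> (\<forall>w. cmod w < 1 \<longrightarrow> cmod ((h ^^ n) w) < 1)" for n
  proof (induction n)
    case 0
    then show ?case by simp
  next
    case (Suc n)
    have "(h \<circ> (h ^^ n)) holomorphic_on ball 0 1"
      by (rule holomorphic_on_compose_gen[OF conjunct1[OF Suc] holh]) (use Suc in auto)
    then show ?case using Suc fI by (simp add: o_def)
  qed
  have fn: "(f ^^ n) (sl I w) = sl I ((h ^^ n) w)" if w: "cmod w < 1" for n w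
  proof (induction n)
    case 0
    then show ?case by simp
  next
    case (Suc n)
    then show ?case using fI hn w by simp
  qed
  define F where "F n = Tay (h ^^ n)" for n
  have Frad: "1 \<le> fps_conv_radius (F n)" for n
    unfolding F_def by (rule Tay(1)[OF conjunct1[OF hn]])
  have Feval: "eval_fps (F n) w = (h ^^ n) w" if "cmod w < 1" for n w
    unfolding F_def by (rule Tay(2)[OF conjunct1[OF hn] that])
  have base: "f q = Ef I (F 1) q" if q: "q \<in> qball" for q
  proof -
    note d = decomp[OF I, of q]
    define z where "z = Complex (qre q) (norm (qim q))"
    define J where "J = (if norm (qim q) = 0 then I else (1 / norm (qim q)) *\<^sub>R qim q)"
    have J: "J \<in> qsphere" using d(1) by (simp add: J_def)
    have qz: "q = sl J z" using d(2) by (simp add: z_def J_def)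
    have z: "cmod z < 1" using q d(3) by (simp add: qball_def z_def)
    have "f (sl J z) = Ef I (F 1) (sl J z)"
    proof (rule slice_ident[OF J reg slice_regular_Ef[OF I Frad] _ z])
      fix x :: real assume x: "\<bar>x\<bar> < 1"
      have x': "cmod (complex_of_real x) < 1" using x by simp
      have "Ef I (F 1) (sl I (complex_of_real x)) = f (sl I (complex_of_real x))"
        using Ef_same[OF I Frad x'] Feval[OF x'] fI[OF x'] by simp
      then show "f (qreal x) = Ef I (F 1) (qreal x)" by simp
    qed
    then show ?thesis using qz by simp
  qed
  have main: "reg_iter f (Suc m) q = Ef I (F (Suc m)) q" if "q \<in> qball" for m q
    using that
  proof (induction m arbitrary: q)
    case 0
    then show ?case using base by simp
  next
    case (Suc m)
    have "(\<lambda>k. qmul (star_pow (reg_iter f (Suc m)) k q) (qcoeffs f k)) sums Ef I (F (Suc (Suc m))) q"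
    proof (rule comp_step[OF I Frad base Frad Suc.IH _ Frad _ Suc.prems])
      fix w :: complex assume w: "cmod w < 1"
      have w': "cmod ((h ^^ Suc m) w) < 1" using hn w by blast
      then show "cmod (eval_fps (F (Suc m)) w) < 1" by (simp only: Feval[OF w])
      show "eval_fps (F (Suc (Suc m))) w = eval_fps (F 1) (eval_fps (F (Suc m)) w)"
        using Feval[OF w, of "Suc m"] Feval[OF w, of "Suc (Suc m)"] Feval[OF w', of 1] by simp
    qed
    then show ?case by (simp add: reg_comp_def sums_iff)
  qed
  show ?thesis
  proof (intro allI impI)
    fix n :: nat assume "n \<ge> 1"
    then obtain m where n: "n = Suc m" by (cases n) auto
    have eq: "\<And>q. q \<in> qball \<Longrightarrow> reg_iter f n q = Ef I (F n) q" using main n by simp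
    have c1: "slice_regular qball (reg_iter f n)"
      by (rule slice_regular_cong[OF slice_regular_Ef[OF I Frad]]) (simp add: eq)
    have c2: "reg_iter f n ` qball \<subseteq> qball"
    proof
      fix p assume "p \<in> reg_iter f n ` qball"
      then obtain q where q: "q \<in> qball" "p = reg_iter f n q" by blast
      have "Ef I (F n) q \<in> qball"
        by (rule Ef_ball[OF I Frad q(1)]) (use Feval hn in simp)
      then show "p \<in> qball" using q eq by simp
    qed
    have c3: "summable (\<lambda>k. qmul (star_pow (reg_iter f n) k q) (qcoeffs f k))" if q: "q \<in> qball" for q
    proof -
      have "(\<lambda>k. qmul (star_pow (reg_iter f n) k q) (qcoeffs f k)) sums Ef I (F (Suc n)) q"
      proof (rule comp_step[OF I Frad base Frad eq _ Frad _ q])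
        fix w :: complex assume w: "cmod w < 1"
        have w': "cmod ((h ^^ n) w) < 1" using hn w by blast
        then show "cmod (eval_fps (F n) w) < 1" by (simp only: Feval[OF w])
        show "eval_fps (F (Suc n)) w = eval_fps (F 1) (eval_fps (F n) w)"
          using Feval[OF w, of n] Feval[OF w, of "Suc n"] Feval[OF w', of 1] by simp
      qed
      then show ?thesis by (simp add: sums_iff)
    qed
    have c4: "reg_iter f n q = regext I (f ^^ n) q" if q: "q \<in> qball" for q
    proof -
      have "Ef I (F n) q = regext I (f ^^ n) q"
        by (rule Ef_regext[OF I Frad q]) (simp add: fn Feval)
      then show ?thesis using eq q by simp
    qed
    show "slice_regular qball (reg_iter f n) \<and>
           reg_iter f n ` qball \<subseteq> qball \<and>
           (\<forall>q\<in>qball. summable (\<lambda>k. qmul (star_pow (reg_iter f n) k q) (qcoeffs f k))) \<and>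
           (\<forall>q\<in>qball. reg_iter f n q = regext I (f ^^ n) q)"
      using c1 c2 c3 c4 by blast
  qed
qed

end
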